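(* Let $K$ be a field and let $r,s\ge 3$ be integers. Let $R$ be a convex $(r+s-2)$-gon with vertices labelled cyclically $1,2,\ldots,r+s-2$. The internal diagonal $\{r-1,r\}$ divides $R$ into two subpolygons: the $r$-gon $P$ with vertices $1,2,\ldots,r$ and the $s$-gon $Q$ with vertices $r-1,r,r+1,\ldots,r+s-2$. Let $D=\{\{r-1,r\}\}$, a dissection of $R$. Let $f:\mathrm{diag}(R)\to K$ be a weak frieze on $R$ with respect to $D$, and suppose $f(r-1,r)\neq 0$. Let $f_P$ and $f_Q$ be the restrictions of $f$ to $\mathrm{diag}(P)$ and $\mathrm{diag}(Q)$ respectively (these are weak friezes with respect to the empty dissection). Let $M_f$, $M_{f_P}$, $M_{f_Q}$ be the associated weak frieze matrices. Then $$\det(M_f) = -f(r-1,r)^{-2}\cdot \det(M_{f_P})\cdot \det(M_{f_Q}).$$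
   Context: For a convex polygon with vertices $1,\ldots,n$ (cyclically ordered), a diagonal is any unordered pair $\{i,j\}$ of distinct vertices (including pairs of neighbouring vertices, i.e. boundary edges); $\mathrm{diag}(P)$ denotes the set of all diagonals. A diagonal $\{i,j\}$ is internal if $i,j$ are not neighbours in the cyclic order. Two diagonals $\{i,j\}$ and $\{k,\ell\}$ cross if in the cyclic order $i<k<j<\ell$ or $i<\ell<j<k$. A dissection is a set of pairwise non-crossing internal diagonals (possibly empty). For a map $f:\mathrm{diag}(P)\to K$ write $f(i,j)=f(\{i,j\})$. Such $f$ is a weak frieze with respect to a dissection $D$ if for every pair of crossing diagonals $\{i,j\},\{k,\ell\}$ at least one of which lies in $D$, the Ptolemy relation $f(i,j)f(k,\ell)=f(i,k)f(j,\ell)+f(i,\ell)f(j,k)$ holds. (With $D=\emptyset$ every map is a weak frieze.) The weak frieze matrix of $f$ on a polygon with vertices $v_1,\ldots,v_m$ is the symmetric $m\times m$ matrix with $(a,b)$-entry $0$ if $a=b$ and $f(v_a,v_b)$ if $a\neq b$ (its determinant does not depend on the chosen ordering of the vertices). *)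

theory Defs
  imports Main "Jordan_Normal_Form.Determinant"
begin

text \<open>A convex polygon is given by the list of its vertex labels in cyclic order
  (distinct labels). Diagonals are two-element sets of vertices.\<close>

definition pos :: "nat list \<Rightarrow> nat \<Rightarrow> nat" where
  "pos vs v = (LEAST k. k < length vs \<and> vs ! k = v)"

definition crosses :: "nat list \<Rightarrow> nat \<Rightarrow> nat \<Rightarrow> nat \<Rightarrow> nat \<Rightarrow> bool" where
  "crosses vs i j k l \<longleftrightarrow>
     (let a = pos vs i; b = pos vs j; c = pos vs k; d = pos vs l in
       (a < c \<and> c < b \<and> b < d) \<or> (a < d \<and> d < b \<and> b < c) \<or>
       (b < c \<and> c < a \<and> a < d) \<or> (b < d \<and> d < a \<and> a < c))"

definition weak_frieze :: "nat list \<Rightarrow> nat set set \<Rightarrow> (nat set \<Rightarrow> 'a::field) \<Rightarrow> bool" where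
  "weak_frieze vs D f \<longleftrightarrow>
     (\<forall>i\<in>set vs. \<forall>j\<in>set vs. \<forall>k\<in>set vs. \<forall>l\<in>set vs.
        crosses vs i j k l \<and> ({i,j} \<in> D \<or> {k,l} \<in> D) \<longrightarrow>
        f {i,j} * f {k,l} = f {i,k} * f {j,l} + f {i,l} * f {j,k})"

definition frieze_matrix :: "nat list \<Rightarrow> (nat set \<Rightarrow> 'a::field) \<Rightarrow> 'a mat" where
  "frieze_matrix vs f = mat (length vs) (length vs)
     (\<lambda>(a,b). if a = b then 0 else f {vs ! a, vs ! b})"

text \<open>The (r+s-2)-gon R obtained by gluing the r-gon P = (1,...,r) and the s-gon
  Q = (r-1,r,...,r+s-2) along the diagonal {r-1,r}; its cyclic order is
  1,...,r-1,r+s-2,...,r+1,r.\<close>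
definition polyR :: "nat \<Rightarrow> nat \<Rightarrow> nat list" where
  "polyR r s = [1..<r] @ rev [r..<r+s-1]"
definition polyP :: "nat \<Rightarrow> nat list" where
  "polyP r = [1..<r+1]"
definition polyQ :: "nat \<Rightarrow> nat \<Rightarrow> nat list" where
  "polyQ r s = [r-1..<r+s-1]"

end

theory Submission
  imports Defs
begin

lemma det_conj:
  fixes A :: "'a::comm_ring_1 mat"
  assumes A: "A \<in> carrier_mat n n" and p: "p permutes {0..<n}"
  shows "det (mat n n (\<lambda>(i,j). A $$ (p i, p j))) = det A"
proof -
  define B where "B = mat n n (\<lambda>(i,j). A $$ (p i, j))"
  have B: "B \<in> carrier_mat n n" unfolding B_def by simp
  have dB: "det B = signof p * det A" unfolding B_def by (rule det_permute_rows[OF A p])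
  have pn: "\<And>i. i < n \<Longrightarrow> p i < n" using p by (metis atLeastLessThan_iff permutes_in_image zero_le)
  have eq: "mat n n (\<lambda>(i,j). A $$ (p i, p j)) = transpose_mat (mat n n (\<lambda>(i,j). transpose_mat B $$ (p i, j)))"
    by (rule eq_matI) (auto simp: B_def pn)
  have "det (mat n n (\<lambda>(i,j). A $$ (p i, p j))) = det (mat n n (\<lambda>(i,j). transpose_mat B $$ (p i, j)))"
    unfolding eq by (rule det_transpose[of _ n]) simp
  also have "\<dots> = signof p * det (transpose_mat B)"
    by (rule det_permute_rows[OF _ p]) (use B in simp)
  also have "\<dots> = signof p * (signof p * det A)" using det_transpose[OF B] dB by simp
  also have "\<dots> = det A"
    by (simp flip: mult.assoc of_int_mult)
  finally show ?thesis .
qed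


definition Yent :: "(nat \<Rightarrow> nat \<Rightarrow> 'a::field) \<Rightarrow> nat \<Rightarrow> nat \<Rightarrow> nat \<Rightarrow> 'a" where
  "Yent g m i j = g i j - g i (Suc m) * g m j / g m (Suc m) - g i m * g (Suc m) j / g m (Suc m)"

lemma block_det:
  fixes g :: "nat \<Rightarrow> nat \<Rightarrow> 'a::field"
  assumes sym: "\<And>i j. g i j = g j i"
  and z1: "g m m = 0" and z2: "g (Suc m) (Suc m) = 0" and x0: "g m (Suc m) \<noteq> 0"
  and rel: "\<And>a b. a < m \<Longrightarrow> m+2 \<le> b \<Longrightarrow> b < m+2+k \<Longrightarrow>
     g a b * g m (Suc m) = g a m * g b (Suc m) + g a (Suc m) * g b m"
  shows "det (mat (m+2+k) (m+2+k) (\<lambda>(i,j). g i j)) =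
     det (mat (m+2) (m+2) (\<lambda>(i,j). g i j)) * det (mat k k (\<lambda>(i,j). Yent g m (m+2+i) (m+2+j)))"
proof -
  define n where "n = m+2+k"
  define x where "x = g m (Suc m)"
  define G where "G = mat n n (\<lambda>(i,j). g i j)"
  define E where "E = mat n n (\<lambda>(i,j). if i = j then 1 else
     if m+2 \<le> i \<and> j = m then - g i (Suc m) / x else
     if m+2 \<le> i \<and> j = Suc m then - g i m / x else (0::'a))"
  define A where "A = mat (m+2) (m+2) (\<lambda>(i,j). g i j)"
  define B where "B = mat (m+2) k (\<lambda>(i,j). g i (m+2+j))"
  define Y where "Y = mat k k (\<lambda>(i,j). Yent g m (m+2+i) (m+2+j))"
  have G: "G \<in> carrier_mat n n" and E: "E \<in> carrier_mat n n" unfolding G_def E_def by auto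
  have dE: "det E = 1"
  proof -
    have "det E = prod_list (diag_mat E)"
      by (rule det_lower_triangular[OF _ E]) (auto simp: E_def)
    also have "diag_mat E = map (\<lambda>i. 1) [0..<n]"
      unfolding diag_mat_def E_def by auto
    moreover have "prod_list (map (\<lambda>i. (1::'a)) xs) = 1" for xs :: "nat list" by (induct xs) auto
    ultimately show ?thesis by simp
  qed
  have row: "(E * G) $$ (i,j) = (if i < m+2 then g i j else
      g i j - g i (Suc m) / x * g m j - g i m / x * g (Suc m) j)" if ij: "i < n" "j < n" for i j
  proof -
    have "(E * G) $$ (i,j) = (\<Sum>l\<in>{0..<n}. E $$ (i,l) * G $$ (l,j))"
      using ij E G by (simp add: scalar_prod_def)
    also have "\<dots> = (\<Sum>l\<in>{0..<n}. (if l = i then g i j else 0) +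
        ((if l = m \<and> m+2 \<le> i then - g i (Suc m) / x * g m j else 0) +
         (if l = Suc m \<and> m+2 \<le> i then - g i m / x * g (Suc m) j else 0)))"
      using ij by (intro sum.cong) (auto simp: E_def G_def)
    also have "\<dots> = (if i < m+2 then g i j else
      g i j - g i (Suc m) / x * g m j - g i m / x * g (Suc m) j)"
      using ij unfolding sum.distrib by (auto simp: n_def)
    finally show ?thesis .
  qed
  have EG: "E * G = four_block_mat A B (0\<^sub>m k (m+2)) Y"
  proof (rule eq_matI)
    fix i j assume ij: "i < dim_row (four_block_mat A B (0\<^sub>m k (m+2)) Y)"
      "j < dim_col (four_block_mat A B (0\<^sub>m k (m+2)) Y)"
    hence ij': "i < n" "j < n" by (auto simp: A_def Y_def n_def)
    have x0': "x \<noteq> 0" using x0 x_def by simp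
    show "(E * G) $$ (i,j) = four_block_mat A B (0\<^sub>m k (m+2)) Y $$ (i,j)"
    proof (cases "i < m+2")
      case True
      have jj: "\<not> j < m+2 \<Longrightarrow> Suc (Suc (j - 2)) = j" by arith
      then show ?thesis using True ij ij' by (auto simp: row A_def B_def Y_def)
    next
      case False
      have "g i j - g i (Suc m) / x * g m j - g i m / x * g (Suc m) j =
         (if j < m+2 then 0 else Yent g m i j)"
      proof (cases "j < m")
        case True
        have "g j i * x = g j m * g i (Suc m) + g j (Suc m) * g i m"
          using rel[of j i] True False ij' unfolding x_def n_def by simp
        then show ?thesis using True x0' sym[of i j] sym[of m j] sym[of "Suc m" j]
          by (simp add: field_simps)
      next
        case jm: False
        show ?thesis
        proof (cases "j < m+2")
          case True
          then have "j = m \<or> j = Suc m" using jm by auto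
          then show ?thesis using x0' z1 z2 sym[of "Suc m" m] unfolding x_def
            by (auto simp: field_simps)
        next
          case False
          then show ?thesis unfolding Yent_def x_def by simp
        qed
      qed
      moreover have "Suc (Suc (i - 2)) = i" "\<not> j < m+2 \<Longrightarrow> Suc (Suc (j - 2)) = j" using False by arith+
      ultimately show ?thesis using False ij ij' by (auto simp: row A_def B_def Y_def)
    qed
  qed (auto simp: E_def G_def A_def Y_def n_def)
  have "det G = det (E * G)" using det_mult[OF E G] dE by simp
  also have "\<dots> = det A * det Y" unfolding EG
    by (rule det_four_block_mat_lower_left_zero) (auto simp: A_def B_def Y_def)
  finally show ?thesis unfolding G_def n_def A_def Y_def .
qed


lemma det_S2:
  fixes x y :: "'a::field"
  shows "det (mat 2 2 (\<lambda>(i,j). if i = j then 0 else if i = 0 then x else y)) = - (x * y)"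
proof -
  let ?p = "Transposition.transpose (0::nat) 1"
  have p: "?p permutes {0..<2}" by (rule permutes_swap_id) auto
  have "det (mat 2 2 (\<lambda>(i,j). (mat 2 2 (\<lambda>(i,j). if i = j then 0 else if i = 0 then x else y)) $$ (?p i, j)))
     = signof ?p * det (mat 2 2 (\<lambda>(i,j). if i = j then 0 else if i = 0 then x else (y::'a)))"
    by (rule det_permute_rows[OF _ p]) simp
  moreover have "det (mat 2 2 (\<lambda>(i,j). (mat 2 2 (\<lambda>(i,j). if i = j then 0 else if i = 0 then x else y)) $$ (?p i, j))) = y * x"
  proof -
    have "det (mat 2 2 (\<lambda>(i,j). (mat 2 2 (\<lambda>(i,j). if i = j then 0 else if i = 0 then x else y)) $$ (?p i, j)))
      = prod_list (diag_mat (mat 2 2 (\<lambda>(i,j). (mat 2 2 (\<lambda>(i,j). if i = j then 0 else if i = 0 then x else y)) $$ (?p i, j))))"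
      by (rule det_upper_triangular) (auto simp: Transposition.transpose_def)
    also have "\<dots> = y * x"
      by (simp add: diag_mat_def upt_rec Transposition.transpose_def)
    finally show ?thesis .
  qed
  moreover have "signof ?p = (-1::'a)" by (simp add: sign_swap_id)
  ultimately have "- det (mat 2 2 (\<lambda>(i,j). if i = j then 0 else if i = 0 then x else y)) = x * y" by (simp add: algebra_simps)
  then show ?thesis by (simp add: minus_equation_iff)
qed

lemma frieze_upt:
  "frieze_matrix [a..<a+n] f = mat n n (\<lambda>(i,j). if i = j then 0 else f {a+i, a+j})"
  unfolding frieze_matrix_def by (rule eq_matI) auto

lemma pos_nth: assumes "distinct vs" "k < length vs" shows "pos vs (vs ! k) = k"
  unfolding pos_def
proof (rule Least_equality)
  show "k < length vs \<and> vs ! k = vs ! k" using assms by simp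
next
  fix y assume "y < length vs \<and> vs ! y = vs ! k"
  then have "y = k" using assms nth_eq_iff_index_eq by blast
  then show "k \<le> y" by simp
qed

lemma det_frieze_perm:
  fixes f :: "nat set \<Rightarrow> 'a::field"
  assumes d: "distinct vs" and s: "set vs = {1..<n+1}"
  shows "det (frieze_matrix vs f) = det (frieze_matrix [1..<n+1] f)"
proof -
  have len: "length vs = n" using distinct_card[OF d] s by simp
  define p where "p = (\<lambda>i. if i < n then vs ! i - 1 else i)"
  have inr: "\<And>i. i < n \<Longrightarrow> vs ! i \<in> {1..<n+1}" using s len nth_mem by blast
  have pv: "\<And>i. i < n \<Longrightarrow> Suc (p i) = vs ! i" unfolding p_def using inr by force
  have inj: "inj_on p {0..<n}"
  proof (rule inj_onI)
    fix i j assume "i \<in> {0..<n}" "j \<in> {0..<n}" "p i = p j"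
    then have "vs ! i = vs ! j" using pv by (metis atLeastLessThan_iff)
    then show "i = j" using d len \<open>i \<in> {0..<n}\<close> \<open>j \<in> {0..<n}\<close> nth_eq_iff_index_eq by auto
  qed
  have sub: "p ` {0..<n} \<subseteq> {0..<n}" using inr unfolding p_def by force
  have "p ` {0..<n} = {0..<n}" by (rule endo_inj_surj[OF _ sub inj]) simp
  then have bij: "bij_betw p {0..<n} {0..<n}" using inj by (simp add: bij_betw_def)
  have p: "p permutes {0..<n}" by (rule bij_imp_permutes[OF bij]) (simp add: p_def)
  have pn: "\<And>i. i < n \<Longrightarrow> p i < n" using sub by (auto simp: image_subset_iff)
  have eq: "frieze_matrix vs f = mat n n (\<lambda>(i,j). frieze_matrix [1..<n+1] f $$ (p i, p j))"
  proof (rule eq_matI)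
    fix i j assume "i < dim_row (mat n n (\<lambda>(i,j). frieze_matrix [1..<n+1] f $$ (p i, p j)))"
      "j < dim_col (mat n n (\<lambda>(i,j). frieze_matrix [1..<n+1] f $$ (p i, p j)))"
    then have ij: "i < n" "j < n" by auto
    have pij: "p i = p j \<longleftrightarrow> i = j" using inj ij by (auto dest: inj_onD)
    have "[1..<n+1] ! p i = vs ! i" "[1..<n+1] ! p j = vs ! j"
      using ij pn[of i] pn[of j] pv[of i] pv[of j] by (simp_all del: upt_Suc)
    then show "frieze_matrix vs f $$ (i, j) = mat n n (\<lambda>(i,j). frieze_matrix [1..<n+1] f $$ (p i, p j)) $$ (i, j)"
      using ij pn pv len pij by (simp add: frieze_matrix_def del: upt_Suc)
  qed (auto simp: frieze_matrix_def len)
  show ?thesis unfolding eq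
    by (rule det_conj[OF _ p]) (simp add: frieze_matrix_def del: upt_Suc)
qed


lemma polyR_nth1: "a < m+1 \<Longrightarrow> polyR (m+2) (k+2) ! a = a + 1"
  unfolding polyR_def by (simp add: nth_append del: upt_Suc)

lemma polyR_nth2: "t \<le> k \<Longrightarrow> polyR (m+2) (k+2) ! (m+1+t) = m+k+2-t"
  unfolding polyR_def by (simp add: nth_append rev_nth del: upt_Suc)

lemma polyR_len: "length (polyR (m+2) (k+2)) = m+k+2"
  unfolding polyR_def by (simp del: upt_Suc)

lemma polyR_distinct: "distinct (polyR (m+2) (k+2))"
  unfolding polyR_def by (auto simp del: upt_Suc)

lemma polyR_set: "set (polyR (m+2) (k+2)) = {1..<m+k+2+1}"
  unfolding polyR_def by (auto simp del: upt_Suc)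

lemma polyR_rel:
  fixes f :: "nat set \<Rightarrow> 'a::field"
  assumes wf: "weak_frieze (polyR (m+2) (k+2)) {{m+1, m+2}} f"
    and a: "a < m" and b1: "m+2 \<le> b" and b2: "b < m+2+k"
  shows "f {a+1, b+1} * f {m+1, m+2} = f {a+1, m+1} * f {b+1, m+2} + f {a+1, m+2} * f {b+1, m+1}"
proof -
  let ?vs = "polyR (m+2) (k+2)"
  define t where "t = m+k+1-b"
  have t: "t < k" "t \<le> k" using b1 b2 unfolding t_def by auto
  have va: "?vs ! a = a+1" using a polyR_nth1 by simp
  have vm: "?vs ! m = m+1" using polyR_nth1 by simp
  have vb: "?vs ! (m+1+t) = b+1" using polyR_nth2[OF t(2)] b1 b2 unfolding t_def by simp
  have vr: "?vs ! (m+1+k) = m+2" using polyR_nth2[of k k m] by simp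
  have d: "distinct ?vs" by (rule polyR_distinct)
  have L: "length ?vs = m+k+2" by (rule polyR_len)
  have pa: "pos ?vs (a+1) = a" using pos_nth[OF d, of a] va a L by simp
  have pm: "pos ?vs (m+1) = m" using pos_nth[OF d, of m] vm L by simp
  have pb: "pos ?vs (b+1) = m+1+t" using pos_nth[OF d, of "m+1+t"] vb t L by simp
  have pr: "pos ?vs (m+2) = m+1+k" using pos_nth[OF d, of "m+1+k"] vr L by simp
  have cr: "crosses ?vs (a+1) (b+1) (m+1) (m+2)"
    unfolding crosses_def Let_def pa pm pb pr using a t by simp
  have mem: "a+1 \<in> set ?vs" "b+1 \<in> set ?vs" "m+1 \<in> set ?vs" "m+2 \<in> set ?vs"
    using a b2 unfolding polyR_set by auto
  show ?thesis using wf mem cr unfolding weak_frieze_def by blast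
qed


theorem theorem3p3:
  fixes r s :: nat and f :: "nat set \<Rightarrow> 'a::field"
  assumes "r \<ge> 3" and "s \<ge> 3"
    and "weak_frieze (polyR r s) {{r-1, r}} f"
    and "f {r-1, r} \<noteq> 0"
  shows "det (frieze_matrix (polyR r s) f) =
    - (inverse (f {r-1, r} * f {r-1, r})) * det (frieze_matrix (polyP r) f) * det (frieze_matrix (polyQ r s) f)"
proof -
  obtain m where m: "r = m+2" "m \<ge> 1" using assms(1) that[of "r-2"] by auto
  obtain k where k: "s = k+2" "k \<ge> 1" using assms(2) that[of "s-2"] by auto
  have r1: "r - 1 = m+1" using m by simp
  define x where "x = f {m+1, m+2}"
  have x0: "x \<noteq> 0" using assms(4) m(1) unfolding x_def by simp
  have wf: "weak_frieze (polyR (m+2) (k+2)) {{m+1, m+2}} f" using assms(3) m(1) k(1) by (simp add: numeral_2_eq_2)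
  define gN where "gN = (\<lambda>i j. if i = j then 0 else f {1+i, 1+j})"
  define gQ where "gQ = (\<lambda>i j. if i = j then 0 else f {m+1+i, m+1+j})"
  have R: "det (frieze_matrix (polyR r s) f) = det (mat (m+2+k) (m+2+k) (\<lambda>(i,j). gN i j))"
  proof -
    have "det (frieze_matrix (polyR r s) f) = det (frieze_matrix [1..<m+k+2+1] f)"
      unfolding m(1) k(1) by (rule det_frieze_perm[OF polyR_distinct polyR_set])
    also have "[1..<m+k+2+1] = [1..<1+(m+2+k)]" by (simp add: algebra_simps)
    finally show ?thesis by (simp only: frieze_upt gN_def)
  qed
  have P: "frieze_matrix (polyP r) f = mat (m+2) (m+2) (\<lambda>(i,j). gN i j)"
  proof -
    have "polyP r = [1..<1+(m+2)]" unfolding polyP_def m(1) by (simp add: algebra_simps)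
    then show ?thesis by (simp only: frieze_upt gN_def)
  qed
  have Q: "frieze_matrix (polyQ r s) f = mat (0+2+k) (0+2+k) (\<lambda>(i,j). gQ i j)"
  proof -
    have "polyQ r s = [m+1..<(m+1)+(0+2+k)]" unfolding polyQ_def m(1) k(1) by (simp add: algebra_simps)
    then show ?thesis by (simp only: frieze_upt gQ_def)
  qed
  have bN: "det (mat (m+2+k) (m+2+k) (\<lambda>(i,j). gN i j)) =
     det (mat (m+2) (m+2) (\<lambda>(i,j). gN i j)) * det (mat k k (\<lambda>(i,j). Yent gN m (m+2+i) (m+2+j)))"
  proof (rule block_det)
    show "gN i j = gN j i" for i j unfolding gN_def by (simp add: insert_commute)
    show "gN m m = 0" "gN (Suc m) (Suc m) = 0" unfolding gN_def by simp_all
    show "gN m (Suc m) \<noteq> 0" using x0 unfolding gN_def x_def by simp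
    fix a b assume ab: "a < m" "m+2 \<le> b" "b < m+2+k"
    have "f {a+1, b+1} * f {m+1, m+2} = f {a+1, m+1} * f {b+1, m+2} + f {a+1, m+2} * f {b+1, m+1}"
      by (rule polyR_rel[OF wf ab])
    then show "gN a b * gN m (Suc m) = gN a m * gN b (Suc m) + gN a (Suc m) * gN b m"
      using ab unfolding gN_def by (simp add: algebra_simps)
  qed
  have bQ: "det (mat (0+2+k) (0+2+k) (\<lambda>(i,j). gQ i j)) =
     det (mat (0+2) (0+2) (\<lambda>(i,j). gQ i j)) * det (mat k k (\<lambda>(i,j). Yent gQ 0 (0+2+i) (0+2+j)))"
  proof (rule block_det)
    show "gQ i j = gQ j i" for i j unfolding gQ_def by (simp add: insert_commute)
    show "gQ 0 0 = 0" "gQ (Suc 0) (Suc 0) = 0" unfolding gQ_def by simp_all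
    show "gQ 0 (Suc 0) \<noteq> 0" using x0 unfolding gQ_def x_def by simp
  qed simp
  have Y: "mat k k (\<lambda>(i,j). Yent gQ 0 (0+2+i) (0+2+j)) = mat k k (\<lambda>(i,j). Yent gN m (m+2+i) (m+2+j))"
  proof (rule eq_matI)
    fix i j assume "i < dim_row (mat k k (\<lambda>(i,j). Yent gN m (m+2+i) (m+2+j)))"
      "j < dim_col (mat k k (\<lambda>(i,j). Yent gN m (m+2+i) (m+2+j)))"
    then have ij: "i < k" "j < k" by auto
    have e: "m+1+(0+2+i) = 1+(m+2+i)" "m+1+(0+2+j) = 1+(m+2+j)" "m+1+Suc 0 = 1 + Suc m" "m+1+0 = 1+m" by simp_all
    show "mat k k (\<lambda>(i,j). Yent gQ 0 (0+2+i) (0+2+j)) $$ (i,j) = mat k k (\<lambda>(i,j). Yent gN m (m+2+i) (m+2+j)) $$ (i,j)"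
      using ij unfolding Yent_def gN_def gQ_def index_mat(1)[OF ij] prod.case e by simp
  qed auto
  have S: "mat (0+2) (0+2) (\<lambda>(i,j). gQ i j) = mat 2 2 (\<lambda>(i,j). if i = j then 0 else if i = 0 then x else x)"
    by (rule eq_matI) (auto simp: gQ_def x_def insert_commute less_2_cases_iff)
  have dS: "det (mat (0+2) (0+2) (\<lambda>(i,j). gQ i j)) = - (x * x)" unfolding S by (rule det_S2)
  show ?thesis
    unfolding R P Q bN bQ Y dS
    using x0 unfolding x_def r1 m(1) by (simp add: field_simps)
qed

end
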